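(* Let $B$ be an integral domain satisfying the ascending chain condition on principal ideals, $p$ a prime element of $B$, $A$ a subring of $B$ and $\pi:B\to A$ a retraction. If $\pi(p)$ is not a unit in $A$, then either $pB\cap A=(0)$ or $pB\cap A=\pi(p)A$. In particular, if moreover $pB\cap A\neq(0)$, then $\pi(p)$ is a prime element of $A$.
   Context: A retraction $\pi:B\to A$ is a ring homomorphism onto the subring $A$ restricting to the identity on $A$. *)

theory Defs
  imports "HOL-Computational_Algebra.Factorial_Ring"
begin

text \<open>ACC on principal ideals: every chain a0 B \<subseteq> a1 B \<subseteq> ... (i.e. a(n+1) dvd a n)
  stabilises (eventually a n dvd a(n+1) as well).\<close>
definition acc_principal :: "('a::comm_semiring_1) itself \<Rightarrow> bool" where
  "acc_principal _ \<longleftrightarrow> (\<forall>f::nat \<Rightarrow> 'a. (\<forall>n. f (Suc n) dvd f n) \<longrightarrow>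
      (\<exists>N. \<forall>n\<ge>N. f n dvd f (Suc n)))"

definition is_subring :: "('a::comm_ring_1) set \<Rightarrow> bool" where
  "is_subring A \<longleftrightarrow> 0 \<in> A \<and> 1 \<in> A \<and> (\<forall>x\<in>A. \<forall>y\<in>A. x + y \<in> A \<and> x * y \<in> A \<and> - x \<in> A)"

definition is_retraction :: "('a::comm_ring_1 \<Rightarrow> 'a) \<Rightarrow> 'a set \<Rightarrow> bool" where
  "is_retraction \<pi> A \<longleftrightarrow>
     (\<forall>x y. \<pi> (x + y) = \<pi> x + \<pi> y) \<and> (\<forall>x y. \<pi> (x * y) = \<pi> x * \<pi> y) \<and> \<pi> 1 = 1 \<and>
     (\<forall>x. \<pi> x \<in> A) \<and> (\<forall>a\<in>A. \<pi> a = a)"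

definition dvd_in :: "'a set \<Rightarrow> ('a::comm_ring_1) \<Rightarrow> 'a \<Rightarrow> bool" where
  "dvd_in A a b \<longleftrightarrow> (\<exists>c\<in>A. b = a * c)"

definition unit_in :: "'a set \<Rightarrow> ('a::comm_ring_1) \<Rightarrow> bool" where
  "unit_in A u \<longleftrightarrow> dvd_in A u 1"

definition prime_elem_in :: "'a set \<Rightarrow> ('a::comm_ring_1) \<Rightarrow> bool" where
  "prime_elem_in A q \<longleftrightarrow> q \<in> A \<and> q \<noteq> 0 \<and> \<not> unit_in A q \<and>
     (\<forall>a\<in>A. \<forall>b\<in>A. dvd_in A q (a * b) \<longrightarrow> dvd_in A q a \<or> dvd_in A q b)"

end

theory Submission
  imports Defs
begin

theorem lemma6p4:
  fixes p :: "'b::idom" and A :: "'b set" and \<pi> :: "'b \<Rightarrow> 'b"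
  assumes "acc_principal TYPE('b)"
    and "prime_elem p"
    and "is_subring A"
    and "is_retraction \<pi> A"
    and "\<not> unit_in A (\<pi> p)"
  shows "({x \<in> A. p dvd x} = {0} \<or> {x \<in> A. p dvd x} = {\<pi> p * a | a. a \<in> A})
         \<and> ({x \<in> A. p dvd x} \<noteq> {0} \<longrightarrow> prime_elem_in A (\<pi> p))"
proof -
  note acc = assms(1)[unfolded acc_principal_def]
  have padd: "\<And>x y. \<pi> (x + y) = \<pi> x + \<pi> y" and pmul: "\<And>x y. \<pi> (x * y) = \<pi> x * \<pi> y"
    and p1: "\<pi> 1 = 1" and pA: "\<And>x. \<pi> x \<in> A" and pid: "\<And>a. a \<in> A \<Longrightarrow> \<pi> a = a"
    using assms(4) unfolding is_retraction_def by auto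
  have A0: "0 \<in> A" and Amul: "\<And>x y. x \<in> A \<Longrightarrow> y \<in> A \<Longrightarrow> x * y \<in> A"
    using assms(3) unfolding is_subring_def by auto
  have pi0: "\<pi> 0 = 0" using padd[of 0 0] by (metis add_cancel_right_right add_0)
  have sub: "{x \<in> A. p dvd x} \<subseteq> {\<pi> p * a | a. a \<in> A}"
  proof
    fix x assume "x \<in> {x \<in> A. p dvd x}"
    then obtain b where x: "x \<in> A" "x = p * b" by auto
    then have "x = \<pi> p * \<pi> b" using pid[of x] pmul by metis
    then show "x \<in> {\<pi> p * a | a. a \<in> A}" using pA by blast
  qed
  show ?thesis
  proof (cases "{x \<in> A. p dvd x} = {0}")
    case True then show ?thesis by simp
  next
    case False
    then obtain a where a: "a \<in> A" "a \<noteq> 0" "p dvd a" using A0 by auto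
    have ppi: "p dvd \<pi> p"
    proof (rule ccontr)
      assume np: "\<not> p dvd \<pi> p"
      define P where "P x \<longleftrightarrow> x \<in> A \<and> x \<noteq> 0 \<and> p dvd x" for x
      have step: "\<exists>y. P y \<and> x = \<pi> p * y" if "P x" for x
      proof -
        from that obtain b where x: "x \<in> A" "x \<noteq> 0" "x = p * b" unfolding P_def by auto
        then have e: "x = \<pi> p * \<pi> b" using pid[of x] pmul by metis
        then have "\<pi> b \<noteq> 0" using x by auto
        moreover have "p dvd \<pi> p * \<pi> b" using e x by (metis dvd_triv_left)
        then have "p dvd \<pi> b" using np assms(2) prime_elem_dvd_mult_iff by blast
        ultimately show ?thesis using e pA unfolding P_def by blast
      qed
      then have "\<forall>x. \<exists>y. P x \<longrightarrow> P y \<and> x = \<pi> p * y" by blast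
      then obtain g where g0: "\<forall>x. P x \<longrightarrow> P (g x) \<and> x = \<pi> p * g x"
        using choice[of "\<lambda>x y. P x \<longrightarrow> P y \<and> x = \<pi> p * y"] by blast
      have g: "\<And>x. P x \<Longrightarrow> P (g x) \<and> x = \<pi> p * g x" using g0 by blast
      define f where "f n = (g ^^ n) a" for n
      have Pf: "P (f n)" for n
      proof (induction n)
        case 0 then show ?case using a by (simp add: f_def P_def)
      next
        case (Suc n)
        have "P (g (f n))" using g[OF Suc] by blast
        then show ?case by (simp add: f_def)
      qed
      have fS: "f (Suc n) = g (f n)" for n by (simp add: f_def)
      have fs: "f n = \<pi> p * f (Suc n)" for n
        unfolding fS using g[OF Pf[of n]] by blast
      have "\<forall>n. f (Suc n) dvd f n"
      proof
        fix n show "f (Suc n) dvd f n" by (subst fs) simp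
      qed
      then obtain N where "f N dvd f (Suc N)" using acc[rule_format, of f] by blast
      then obtain c where c: "f (Suc N) = f N * c" by auto
      have "f N * 1 = f N * (\<pi> p * c)" proof -
        have h: "f N = \<pi> p * (f N * c)" using fs[of N] unfolding c .
        have "f N * (\<pi> p * c) = \<pi> p * (f N * c)" by (simp only: ac_simps)
        then show ?thesis using h by (simp only: mult_1_right)
      qed
      moreover have "f N \<noteq> 0" using Pf[of N] by (simp add: P_def)
      ultimately have "1 = \<pi> p * c" by simp
      then have "\<pi> 1 = \<pi> (\<pi> p * c)" by simp
      then have "1 = \<pi> (\<pi> p) * \<pi> c" by (simp only: p1 pmul)
      then have "1 = \<pi> p * \<pi> c" using pid[OF pA[of p]] by simp
      then have "unit_in A (\<pi> p)" unfolding unit_in_def dvd_in_def using pA by blast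
      then show False using assms(5) by simp
    qed
    have sup: "{\<pi> p * a | a. a \<in> A} \<subseteq> {x \<in> A. p dvd x}"
      using ppi pA Amul by auto
    have eq: "{x \<in> A. p dvd x} = {\<pi> p * a | a. a \<in> A}" using sub sup by blast
    have nz: "\<pi> p \<noteq> 0"
    proof
      assume "\<pi> p = 0"
      then have "{x \<in> A. p dvd x} = {0}" using eq A0 by auto
      then show False using False by simp
    qed
    have "prime_elem_in A (\<pi> p)"
      unfolding prime_elem_in_def
    proof (intro conjI ballI impI)
      show "\<pi> p \<in> A" by (rule pA)
      show "\<pi> p \<noteq> 0" by (rule nz)
      show "\<not> unit_in A (\<pi> p)" by (rule assms(5))
      fix x y assume xy: "x \<in> A" "y \<in> A" "dvd_in A (\<pi> p) (x * y)"
      then have "p dvd x * y" unfolding dvd_in_def using ppi by (auto intro: dvd_mult2)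
      then have "p dvd x \<or> p dvd y" using assms(2) prime_elem_dvd_mult_iff by blast
      then have "x \<in> {\<pi> p * a | a. a \<in> A} \<or> y \<in> {\<pi> p * a | a. a \<in> A}"
        using eq xy by blast
      then show "dvd_in A (\<pi> p) x \<or> dvd_in A (\<pi> p) y" unfolding dvd_in_def by blast
    qed
    then show ?thesis using eq by simp
  qed
qed

end
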